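(* Let $\mathcal{A}\in\mathcal{T}'_7$ with $c_{13}^4=c_{14}^5=c_{15}^6=c_{24}^5=c_{25}^6=c_{14}^6=c_{24}^6=c_{13}^6=0$ and $c_{13}^5c_{35}^6c_{46}^7\ne0$. Then the automorphisms of $\mathcal{A}$ are exactly the linear maps $\varphi$ with $\varphi(e_1)=e_1+a_{71}e_7$, $\varphi(e_2)=e_2+a_{72}e_7$, $\varphi(e_i)=e_i$ for $3\le i\le7$, where $a_{71},a_{72}\in\mathbb{C}$.
   Context: Over $\mathbb{C}$, basis $e_1,\dots,e_n$, $e_ie_j=\sum_kc_{ij}^ke_k$. For $n\ge3$, $\mathcal{T}'_n$ is the family of anticommutative algebra structures with $c_{ij}^k=0$ whenever $k\le\max\{i,j\}$ and $e_ie_{i+1}=e_{i+2}$ for $1\le i\le n-2$, other structure constants arbitrary subject to these and anticommutativity. *)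

theory Defs
  imports Complex_Main
begin

text \<open>Vectors of C^n are functions nat => complex supported on {1..n};
  e i is the i-th standard basis vector; c i j k is the structure constant c_{ij}^k.\<close>

definition vsp :: "nat \<Rightarrow> (nat \<Rightarrow> complex) set" where
  "vsp n = {x. \<forall>i. i \<notin> {1..n} \<longrightarrow> x i = 0}"

definition bvec :: "nat \<Rightarrow> nat \<Rightarrow> complex" where
  "bvec i = (\<lambda>k. if k = i then 1 else 0)"

definition alg_mult :: "nat \<Rightarrow> (nat \<Rightarrow> nat \<Rightarrow> nat \<Rightarrow> complex)
    \<Rightarrow> (nat \<Rightarrow> complex) \<Rightarrow> (nat \<Rightarrow> complex) \<Rightarrow> (nat \<Rightarrow> complex)" where
  "alg_mult n c x y = (\<lambda>k. if k \<in> {1..n}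
      then (\<Sum>i=1..n. \<Sum>j=1..n. x i * y j * c i j k) else 0)"

definition in_Tprime :: "nat \<Rightarrow> (nat \<Rightarrow> nat \<Rightarrow> nat \<Rightarrow> complex) \<Rightarrow> bool" where
  "in_Tprime n c \<longleftrightarrow> 3 \<le> n
    \<and> (\<forall>i\<in>{1..n}. \<forall>j\<in>{1..n}. \<forall>k\<in>{1..n}. c i j k = - c j i k)
    \<and> (\<forall>i\<in>{1..n}. \<forall>j\<in>{1..n}. \<forall>k\<in>{1..n}. k \<le> max i j \<longrightarrow> c i j k = 0)
    \<and> (\<forall>i. 1 \<le> i \<and> i \<le> n - 2 \<longrightarrow>
          (\<forall>k\<in>{1..n}. c i (i+1) k = (if k = i + 2 then 1 else 0)))"

definition lin_on :: "nat \<Rightarrow> ((nat \<Rightarrow> complex) \<Rightarrow> (nat \<Rightarrow> complex)) \<Rightarrow> bool" where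
  "lin_on n f \<longleftrightarrow> (\<forall>x\<in>vsp n. f x \<in> vsp n)
     \<and> (\<forall>x\<in>vsp n. \<forall>y\<in>vsp n. f (\<lambda>k. x k + y k) = (\<lambda>k. f x k + f y k))
     \<and> (\<forall>a. \<forall>x\<in>vsp n. f (\<lambda>k. a * x k) = (\<lambda>k. a * f x k))"

definition is_automorphism :: "nat \<Rightarrow> (nat \<Rightarrow> nat \<Rightarrow> nat \<Rightarrow> complex)
    \<Rightarrow> ((nat \<Rightarrow> complex) \<Rightarrow> (nat \<Rightarrow> complex)) \<Rightarrow> bool" where
  "is_automorphism n c f \<longleftrightarrow> lin_on n f \<and> bij_betw f (vsp n) (vsp n)
     \<and> (\<forall>x\<in>vsp n. \<forall>y\<in>vsp n. f (alg_mult n c x y) = alg_mult n c (f x) (f y))"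

end

theory Submission
  imports Defs
begin

lemma cvals:
  fixes c :: "nat \<Rightarrow> nat \<Rightarrow> nat \<Rightarrow> complex"
  assumes T: "in_Tprime 7 c"
    and "c 1 3 4 = 0" and "c 1 4 5 = 0" and "c 1 5 6 = 0" and "c 2 4 5 = 0"
    and "c 2 5 6 = 0" and "c 1 4 6 = 0" and "c 2 4 6 = 0" and "c 1 3 6 = 0"
  shows "c 1 1 1 = 0"
    and "c 1 1 2 = 0"
    and "c 1 1 3 = 0"
    and "c 1 1 4 = 0"
    and "c 1 1 5 = 0"
    and "c 1 1 6 = 0"
    and "c 1 1 7 = 0"
    and "c 1 2 1 = 0"
    and "c 1 2 2 = 0"
    and "c 1 2 3 = 1"
    and "c 1 2 4 = 0"
    and "c 1 2 5 = 0"
    and "c 1 2 6 = 0"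
    and "c 1 2 7 = 0"
    and "c 1 3 1 = 0"
    and "c 1 3 2 = 0"
    and "c 1 3 3 = 0"
    and "c 1 3 4 = 0"
    and "c 1 3 6 = 0"
    and "c 1 4 1 = 0"
    and "c 1 4 2 = 0"
    and "c 1 4 3 = 0"
    and "c 1 4 4 = 0"
    and "c 1 4 5 = 0"
    and "c 1 4 6 = 0"
    and "c 1 5 1 = 0"
    and "c 1 5 2 = 0"
    and "c 1 5 3 = 0"
    and "c 1 5 4 = 0"
    and "c 1 5 5 = 0"
    and "c 1 5 6 = 0"
    and "c 1 6 1 = 0"
    and "c 1 6 2 = 0"
    and "c 1 6 3 = 0"
    and "c 1 6 4 = 0"
    and "c 1 6 5 = 0"
    and "c 1 6 6 = 0"
    and "c 1 7 1 = 0"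
    and "c 1 7 2 = 0"
    and "c 1 7 3 = 0"
    and "c 1 7 4 = 0"
    and "c 1 7 5 = 0"
    and "c 1 7 6 = 0"
    and "c 1 7 7 = 0"
    and "c 2 1 1 = 0"
    and "c 2 1 2 = 0"
    and "c 2 1 3 = -1"
    and "c 2 1 4 = 0"
    and "c 2 1 5 = 0"
    and "c 2 1 6 = 0"
    and "c 2 1 7 = 0"
    and "c 2 2 1 = 0"
    and "c 2 2 2 = 0"
    and "c 2 2 3 = 0"
    and "c 2 2 4 = 0"
    and "c 2 2 5 = 0"
    and "c 2 2 6 = 0"
    and "c 2 2 7 = 0"
    and "c 2 3 1 = 0"
    and "c 2 3 2 = 0"
    and "c 2 3 3 = 0"
    and "c 2 3 4 = 1"
    and "c 2 3 5 = 0"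
    and "c 2 3 6 = 0"
    and "c 2 3 7 = 0"
    and "c 2 4 1 = 0"
    and "c 2 4 2 = 0"
    and "c 2 4 3 = 0"
    and "c 2 4 4 = 0"
    and "c 2 4 5 = 0"
    and "c 2 4 6 = 0"
    and "c 2 5 1 = 0"
    and "c 2 5 2 = 0"
    and "c 2 5 3 = 0"
    and "c 2 5 4 = 0"
    and "c 2 5 5 = 0"
    and "c 2 5 6 = 0"
    and "c 2 6 1 = 0"
    and "c 2 6 2 = 0"
    and "c 2 6 3 = 0"
    and "c 2 6 4 = 0"
    and "c 2 6 5 = 0"
    and "c 2 6 6 = 0"
    and "c 2 7 1 = 0"
    and "c 2 7 2 = 0"
    and "c 2 7 3 = 0"
    and "c 2 7 4 = 0"
    and "c 2 7 5 = 0"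
    and "c 2 7 6 = 0"
    and "c 2 7 7 = 0"
    and "c 3 1 1 = 0"
    and "c 3 1 2 = 0"
    and "c 3 1 3 = 0"
    and "c 3 1 4 = 0"
    and "c 3 1 5 = - c 1 3 5"
    and "c 3 1 6 = 0"
    and "c 3 1 7 = - c 1 3 7"
    and "c 3 2 1 = 0"
    and "c 3 2 2 = 0"
    and "c 3 2 3 = 0"
    and "c 3 2 4 = -1"
    and "c 3 2 5 = 0"
    and "c 3 2 6 = 0"
    and "c 3 2 7 = 0"
    and "c 3 3 1 = 0"
    and "c 3 3 2 = 0"
    and "c 3 3 3 = 0"
    and "c 3 3 4 = 0"
    and "c 3 3 5 = 0"
    and "c 3 3 6 = 0"
    and "c 3 3 7 = 0"
    and "c 3 4 1 = 0"
    and "c 3 4 2 = 0"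
    and "c 3 4 3 = 0"
    and "c 3 4 4 = 0"
    and "c 3 4 5 = 1"
    and "c 3 4 6 = 0"
    and "c 3 4 7 = 0"
    and "c 3 5 1 = 0"
    and "c 3 5 2 = 0"
    and "c 3 5 3 = 0"
    and "c 3 5 4 = 0"
    and "c 3 5 5 = 0"
    and "c 3 6 1 = 0"
    and "c 3 6 2 = 0"
    and "c 3 6 3 = 0"
    and "c 3 6 4 = 0"
    and "c 3 6 5 = 0"
    and "c 3 6 6 = 0"
    and "c 3 7 1 = 0"
    and "c 3 7 2 = 0"
    and "c 3 7 3 = 0"
    and "c 3 7 4 = 0"
    and "c 3 7 5 = 0"
    and "c 3 7 6 = 0"
    and "c 3 7 7 = 0"
    and "c 4 1 1 = 0"
    and "c 4 1 2 = 0"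
    and "c 4 1 3 = 0"
    and "c 4 1 4 = 0"
    and "c 4 1 5 = 0"
    and "c 4 1 6 = 0"
    and "c 4 1 7 = - c 1 4 7"
    and "c 4 2 1 = 0"
    and "c 4 2 2 = 0"
    and "c 4 2 3 = 0"
    and "c 4 2 4 = 0"
    and "c 4 2 5 = 0"
    and "c 4 2 6 = 0"
    and "c 4 2 7 = - c 2 4 7"
    and "c 4 3 1 = 0"
    and "c 4 3 2 = 0"
    and "c 4 3 3 = 0"
    and "c 4 3 4 = 0"
    and "c 4 3 5 = -1"
    and "c 4 3 6 = 0"
    and "c 4 3 7 = 0"
    and "c 4 4 1 = 0"
    and "c 4 4 2 = 0"
    and "c 4 4 3 = 0"
    and "c 4 4 4 = 0"
    and "c 4 4 5 = 0"
    and "c 4 4 6 = 0"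
    and "c 4 4 7 = 0"
    and "c 4 5 1 = 0"
    and "c 4 5 2 = 0"
    and "c 4 5 3 = 0"
    and "c 4 5 4 = 0"
    and "c 4 5 5 = 0"
    and "c 4 5 6 = 1"
    and "c 4 5 7 = 0"
    and "c 4 6 1 = 0"
    and "c 4 6 2 = 0"
    and "c 4 6 3 = 0"
    and "c 4 6 4 = 0"
    and "c 4 6 5 = 0"
    and "c 4 6 6 = 0"
    and "c 4 7 1 = 0"
    and "c 4 7 2 = 0"
    and "c 4 7 3 = 0"
    and "c 4 7 4 = 0"
    and "c 4 7 5 = 0"
    and "c 4 7 6 = 0"
    and "c 4 7 7 = 0"
    and "c 5 1 1 = 0"
    and "c 5 1 2 = 0"
    and "c 5 1 3 = 0"
    and "c 5 1 4 = 0"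
    and "c 5 1 5 = 0"
    and "c 5 1 6 = 0"
    and "c 5 1 7 = - c 1 5 7"
    and "c 5 2 1 = 0"
    and "c 5 2 2 = 0"
    and "c 5 2 3 = 0"
    and "c 5 2 4 = 0"
    and "c 5 2 5 = 0"
    and "c 5 2 6 = 0"
    and "c 5 2 7 = - c 2 5 7"
    and "c 5 3 1 = 0"
    and "c 5 3 2 = 0"
    and "c 5 3 3 = 0"
    and "c 5 3 4 = 0"
    and "c 5 3 5 = 0"
    and "c 5 3 6 = - c 3 5 6"
    and "c 5 3 7 = - c 3 5 7"
    and "c 5 4 1 = 0"
    and "c 5 4 2 = 0"
    and "c 5 4 3 = 0"
    and "c 5 4 4 = 0"
    and "c 5 4 5 = 0"
    and "c 5 4 6 = -1"
    and "c 5 4 7 = 0"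
    and "c 5 5 1 = 0"
    and "c 5 5 2 = 0"
    and "c 5 5 3 = 0"
    and "c 5 5 4 = 0"
    and "c 5 5 5 = 0"
    and "c 5 5 6 = 0"
    and "c 5 5 7 = 0"
    and "c 5 6 1 = 0"
    and "c 5 6 2 = 0"
    and "c 5 6 3 = 0"
    and "c 5 6 4 = 0"
    and "c 5 6 5 = 0"
    and "c 5 6 6 = 0"
    and "c 5 6 7 = 1"
    and "c 5 7 1 = 0"
    and "c 5 7 2 = 0"
    and "c 5 7 3 = 0"
    and "c 5 7 4 = 0"
    and "c 5 7 5 = 0"
    and "c 5 7 6 = 0"
    and "c 5 7 7 = 0"
    and "c 6 1 1 = 0"
    and "c 6 1 2 = 0"
    and "c 6 1 3 = 0"
    and "c 6 1 4 = 0"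
    and "c 6 1 5 = 0"
    and "c 6 1 6 = 0"
    and "c 6 1 7 = - c 1 6 7"
    and "c 6 2 1 = 0"
    and "c 6 2 2 = 0"
    and "c 6 2 3 = 0"
    and "c 6 2 4 = 0"
    and "c 6 2 5 = 0"
    and "c 6 2 6 = 0"
    and "c 6 2 7 = - c 2 6 7"
    and "c 6 3 1 = 0"
    and "c 6 3 2 = 0"
    and "c 6 3 3 = 0"
    and "c 6 3 4 = 0"
    and "c 6 3 5 = 0"
    and "c 6 3 6 = 0"
    and "c 6 3 7 = - c 3 6 7"
    and "c 6 4 1 = 0"
    and "c 6 4 2 = 0"
    and "c 6 4 3 = 0"
    and "c 6 4 4 = 0"
    and "c 6 4 5 = 0"
    and "c 6 4 6 = 0"
    and "c 6 4 7 = - c 4 6 7"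
    and "c 6 5 1 = 0"
    and "c 6 5 2 = 0"
    and "c 6 5 3 = 0"
    and "c 6 5 4 = 0"
    and "c 6 5 5 = 0"
    and "c 6 5 6 = 0"
    and "c 6 5 7 = -1"
    and "c 6 6 1 = 0"
    and "c 6 6 2 = 0"
    and "c 6 6 3 = 0"
    and "c 6 6 4 = 0"
    and "c 6 6 5 = 0"
    and "c 6 6 6 = 0"
    and "c 6 6 7 = 0"
    and "c 6 7 1 = 0"
    and "c 6 7 2 = 0"
    and "c 6 7 3 = 0"
    and "c 6 7 4 = 0"
    and "c 6 7 5 = 0"
    and "c 6 7 6 = 0"
    and "c 6 7 7 = 0"
    and "c 7 1 1 = 0"
    and "c 7 1 2 = 0"
    and "c 7 1 3 = 0"
    and "c 7 1 4 = 0"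
    and "c 7 1 5 = 0"
    and "c 7 1 6 = 0"
    and "c 7 1 7 = 0"
    and "c 7 2 1 = 0"
    and "c 7 2 2 = 0"
    and "c 7 2 3 = 0"
    and "c 7 2 4 = 0"
    and "c 7 2 5 = 0"
    and "c 7 2 6 = 0"
    and "c 7 2 7 = 0"
    and "c 7 3 1 = 0"
    and "c 7 3 2 = 0"
    and "c 7 3 3 = 0"
    and "c 7 3 4 = 0"
    and "c 7 3 5 = 0"
    and "c 7 3 6 = 0"
    and "c 7 3 7 = 0"
    and "c 7 4 1 = 0"
    and "c 7 4 2 = 0"
    and "c 7 4 3 = 0"
    and "c 7 4 4 = 0"
    and "c 7 4 5 = 0"
    and "c 7 4 6 = 0"
    and "c 7 4 7 = 0"
    and "c 7 5 1 = 0"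
    and "c 7 5 2 = 0"
    and "c 7 5 3 = 0"
    and "c 7 5 4 = 0"
    and "c 7 5 5 = 0"
    and "c 7 5 6 = 0"
    and "c 7 5 7 = 0"
    and "c 7 6 1 = 0"
    and "c 7 6 2 = 0"
    and "c 7 6 3 = 0"
    and "c 7 6 4 = 0"
    and "c 7 6 5 = 0"
    and "c 7 6 6 = 0"
    and "c 7 6 7 = 0"
    and "c 7 7 1 = 0"
    and "c 7 7 2 = 0"
    and "c 7 7 3 = 0"
    and "c 7 7 4 = 0"
    and "c 7 7 5 = 0"
    and "c 7 7 6 = 0"
    and "c 7 7 7 = 0"
proof -
  have W: "(\<forall>i\<in>{1..7}. \<forall>j\<in>{1..7}. \<forall>k\<in>{1..7}. c i j k = - c j i k)
    \<and> (\<forall>i\<in>{1..7}. \<forall>j\<in>{1..7}. \<forall>k\<in>{1..7}. k \<le> max i j \<longrightarrow> c i j k = 0)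
    \<and> (\<forall>i. 1 \<le> i \<and> i \<le> 7 - 2 \<longrightarrow>
          (\<forall>k\<in>{1..7}. c i (i+1) k = (if k = i + 2 then 1 else (0::complex))))"
    using T unfolding in_Tprime_def by (elim conjE) (intro conjI)
  note W1 = conjunct1[OF W] and W2 = conjunct1[OF conjunct2[OF W]] and W3 = conjunct2[OF conjunct2[OF W]]
  have Z: "c i j k = 0" if "i \<in> {1..7}" "j \<in> {1..7}" "k \<in> {1..7}" "k \<le> max i j" for i j k
    using bspec[OF bspec[OF bspec[OF W2 that(1)] that(2)] that(3)] that(4) by (rule mp)
  have A: "c i j k = - c j i k" if "i \<in> {1..7}" "j \<in> {1..7}" "k \<in> {1..7}" for i j k
    using bspec[OF bspec[OF bspec[OF W1 that(1)] that(2)] that(3)] .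
  have C: "c i j k = (if k = i + 2 then 1 else 0)" if "1 \<le> i" "i \<le> 5" "k \<in> {1..7}" "j = i + 1" for i j k
  proof -
    have "1 \<le> i \<and> i \<le> 7 - 2" using that by simp
    from bspec[OF mp[OF spec[OF W3, of i] this] that(3)] show ?thesis using that(4) by simp
  qed
  show "c 1 1 1 = 0" using Z[of 1 1 1] by simp
  show "c 1 1 2 = 0" using A[of 1 1 2] by simp
  show "c 1 1 3 = 0" using A[of 1 1 3] by simp
  show "c 1 1 4 = 0" using A[of 1 1 4] by simp
  show "c 1 1 5 = 0" using A[of 1 1 5] by simp
  show "c 1 1 6 = 0" using A[of 1 1 6] by simp
  show "c 1 1 7 = 0" using A[of 1 1 7] by simp
  show "c 1 2 1 = 0" using Z[of 1 2 1] by simp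
  show "c 1 2 2 = 0" using Z[of 1 2 2] by simp
  show "c 1 2 3 = 1" by (rule trans[OF C[where i=1 and j=2 and k=3]]) simp_all
  show "c 1 2 4 = 0" by (rule trans[OF C[where i=1 and j=2 and k=4]]) simp_all
  show "c 1 2 5 = 0" by (rule trans[OF C[where i=1 and j=2 and k=5]]) simp_all
  show "c 1 2 6 = 0" by (rule trans[OF C[where i=1 and j=2 and k=6]]) simp_all
  show "c 1 2 7 = 0" by (rule trans[OF C[where i=1 and j=2 and k=7]]) simp_all
  show "c 1 3 1 = 0" using Z[of 1 3 1] by simp
  show "c 1 3 2 = 0" using Z[of 1 3 2] by simp
  show "c 1 3 3 = 0" using Z[of 1 3 3] by simp
  show "c 1 3 4 = 0" using assms by simp
  show "c 1 3 6 = 0" using assms by simp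
  show "c 1 4 1 = 0" using Z[of 1 4 1] by simp
  show "c 1 4 2 = 0" using Z[of 1 4 2] by simp
  show "c 1 4 3 = 0" using Z[of 1 4 3] by simp
  show "c 1 4 4 = 0" using Z[of 1 4 4] by simp
  show "c 1 4 5 = 0" using assms by simp
  show "c 1 4 6 = 0" using assms by simp
  show "c 1 5 1 = 0" using Z[of 1 5 1] by simp
  show "c 1 5 2 = 0" using Z[of 1 5 2] by simp
  show "c 1 5 3 = 0" using Z[of 1 5 3] by simp
  show "c 1 5 4 = 0" using Z[of 1 5 4] by simp
  show "c 1 5 5 = 0" using Z[of 1 5 5] by simp
  show "c 1 5 6 = 0" using assms by simp
  show "c 1 6 1 = 0" using Z[of 1 6 1] by simp
  show "c 1 6 2 = 0" using Z[of 1 6 2] by simp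
  show "c 1 6 3 = 0" using Z[of 1 6 3] by simp
  show "c 1 6 4 = 0" using Z[of 1 6 4] by simp
  show "c 1 6 5 = 0" using Z[of 1 6 5] by simp
  show "c 1 6 6 = 0" using Z[of 1 6 6] by simp
  show "c 1 7 1 = 0" using Z[of 1 7 1] by simp
  show "c 1 7 2 = 0" using Z[of 1 7 2] by simp
  show "c 1 7 3 = 0" using Z[of 1 7 3] by simp
  show "c 1 7 4 = 0" using Z[of 1 7 4] by simp
  show "c 1 7 5 = 0" using Z[of 1 7 5] by simp
  show "c 1 7 6 = 0" using Z[of 1 7 6] by simp
  show "c 1 7 7 = 0" using Z[of 1 7 7] by simp
  show "c 2 1 1 = 0" using Z[of 2 1 1] by simp
  show "c 2 1 2 = 0" using Z[of 2 1 2] by simp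
  show "c 2 1 3 = -1"
  proof -
    have "c 1 2 3 = 1" by (rule trans[OF C[where i=1 and j=2 and k=3]]) simp_all
    then show ?thesis using A[of 2 1 3] by simp
  qed
  show "c 2 1 4 = 0"
  proof -
    have "c 1 2 4 = 0" by (rule trans[OF C[where i=1 and j=2 and k=4]]) simp_all
    then show ?thesis using A[of 2 1 4] by simp
  qed
  show "c 2 1 5 = 0"
  proof -
    have "c 1 2 5 = 0" by (rule trans[OF C[where i=1 and j=2 and k=5]]) simp_all
    then show ?thesis using A[of 2 1 5] by simp
  qed
  show "c 2 1 6 = 0"
  proof -
    have "c 1 2 6 = 0" by (rule trans[OF C[where i=1 and j=2 and k=6]]) simp_all
    then show ?thesis using A[of 2 1 6] by simp
  qed
  show "c 2 1 7 = 0"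
  proof -
    have "c 1 2 7 = 0" by (rule trans[OF C[where i=1 and j=2 and k=7]]) simp_all
    then show ?thesis using A[of 2 1 7] by simp
  qed
  show "c 2 2 1 = 0" using Z[of 2 2 1] by simp
  show "c 2 2 2 = 0" using Z[of 2 2 2] by simp
  show "c 2 2 3 = 0" using A[of 2 2 3] by simp
  show "c 2 2 4 = 0" using A[of 2 2 4] by simp
  show "c 2 2 5 = 0" using A[of 2 2 5] by simp
  show "c 2 2 6 = 0" using A[of 2 2 6] by simp
  show "c 2 2 7 = 0" using A[of 2 2 7] by simp
  show "c 2 3 1 = 0" using Z[of 2 3 1] by simp
  show "c 2 3 2 = 0" using Z[of 2 3 2] by simp
  show "c 2 3 3 = 0" using Z[of 2 3 3] by simp
  show "c 2 3 4 = 1" by (rule trans[OF C[where i=2 and j=3 and k=4]]) simp_all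
  show "c 2 3 5 = 0" by (rule trans[OF C[where i=2 and j=3 and k=5]]) simp_all
  show "c 2 3 6 = 0" by (rule trans[OF C[where i=2 and j=3 and k=6]]) simp_all
  show "c 2 3 7 = 0" by (rule trans[OF C[where i=2 and j=3 and k=7]]) simp_all
  show "c 2 4 1 = 0" using Z[of 2 4 1] by simp
  show "c 2 4 2 = 0" using Z[of 2 4 2] by simp
  show "c 2 4 3 = 0" using Z[of 2 4 3] by simp
  show "c 2 4 4 = 0" using Z[of 2 4 4] by simp
  show "c 2 4 5 = 0" using assms by simp
  show "c 2 4 6 = 0" using assms by simp
  show "c 2 5 1 = 0" using Z[of 2 5 1] by simp
  show "c 2 5 2 = 0" using Z[of 2 5 2] by simp
  show "c 2 5 3 = 0" using Z[of 2 5 3] by simp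
  show "c 2 5 4 = 0" using Z[of 2 5 4] by simp
  show "c 2 5 5 = 0" using Z[of 2 5 5] by simp
  show "c 2 5 6 = 0" using assms by simp
  show "c 2 6 1 = 0" using Z[of 2 6 1] by simp
  show "c 2 6 2 = 0" using Z[of 2 6 2] by simp
  show "c 2 6 3 = 0" using Z[of 2 6 3] by simp
  show "c 2 6 4 = 0" using Z[of 2 6 4] by simp
  show "c 2 6 5 = 0" using Z[of 2 6 5] by simp
  show "c 2 6 6 = 0" using Z[of 2 6 6] by simp
  show "c 2 7 1 = 0" using Z[of 2 7 1] by simp
  show "c 2 7 2 = 0" using Z[of 2 7 2] by simp
  show "c 2 7 3 = 0" using Z[of 2 7 3] by simp
  show "c 2 7 4 = 0" using Z[of 2 7 4] by simp
  show "c 2 7 5 = 0" using Z[of 2 7 5] by simp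
  show "c 2 7 6 = 0" using Z[of 2 7 6] by simp
  show "c 2 7 7 = 0" using Z[of 2 7 7] by simp
  show "c 3 1 1 = 0" using Z[of 3 1 1] by simp
  show "c 3 1 2 = 0" using Z[of 3 1 2] by simp
  show "c 3 1 3 = 0" using Z[of 3 1 3] by simp
  show "c 3 1 4 = 0" using A[of 3 1 4] assms by simp
  show "c 3 1 5 = - c 1 3 5" using A[of 3 1 5] by simp
  show "c 3 1 6 = 0" using A[of 3 1 6] assms by simp
  show "c 3 1 7 = - c 1 3 7" using A[of 3 1 7] by simp
  show "c 3 2 1 = 0" using Z[of 3 2 1] by simp
  show "c 3 2 2 = 0" using Z[of 3 2 2] by simp
  show "c 3 2 3 = 0" using Z[of 3 2 3] by simp
  show "c 3 2 4 = -1"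
  proof -
    have "c 2 3 4 = 1" by (rule trans[OF C[where i=2 and j=3 and k=4]]) simp_all
    then show ?thesis using A[of 3 2 4] by simp
  qed
  show "c 3 2 5 = 0"
  proof -
    have "c 2 3 5 = 0" by (rule trans[OF C[where i=2 and j=3 and k=5]]) simp_all
    then show ?thesis using A[of 3 2 5] by simp
  qed
  show "c 3 2 6 = 0"
  proof -
    have "c 2 3 6 = 0" by (rule trans[OF C[where i=2 and j=3 and k=6]]) simp_all
    then show ?thesis using A[of 3 2 6] by simp
  qed
  show "c 3 2 7 = 0"
  proof -
    have "c 2 3 7 = 0" by (rule trans[OF C[where i=2 and j=3 and k=7]]) simp_all
    then show ?thesis using A[of 3 2 7] by simp
  qed
  show "c 3 3 1 = 0" using Z[of 3 3 1] by simp
  show "c 3 3 2 = 0" using Z[of 3 3 2] by simp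
  show "c 3 3 3 = 0" using Z[of 3 3 3] by simp
  show "c 3 3 4 = 0" using A[of 3 3 4] by simp
  show "c 3 3 5 = 0" using A[of 3 3 5] by simp
  show "c 3 3 6 = 0" using A[of 3 3 6] by simp
  show "c 3 3 7 = 0" using A[of 3 3 7] by simp
  show "c 3 4 1 = 0" using Z[of 3 4 1] by simp
  show "c 3 4 2 = 0" using Z[of 3 4 2] by simp
  show "c 3 4 3 = 0" using Z[of 3 4 3] by simp
  show "c 3 4 4 = 0" using Z[of 3 4 4] by simp
  show "c 3 4 5 = 1" by (rule trans[OF C[where i=3 and j=4 and k=5]]) simp_all
  show "c 3 4 6 = 0" by (rule trans[OF C[where i=3 and j=4 and k=6]]) simp_all
  show "c 3 4 7 = 0" by (rule trans[OF C[where i=3 and j=4 and k=7]]) simp_all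
  show "c 3 5 1 = 0" using Z[of 3 5 1] by simp
  show "c 3 5 2 = 0" using Z[of 3 5 2] by simp
  show "c 3 5 3 = 0" using Z[of 3 5 3] by simp
  show "c 3 5 4 = 0" using Z[of 3 5 4] by simp
  show "c 3 5 5 = 0" using Z[of 3 5 5] by simp
  show "c 3 6 1 = 0" using Z[of 3 6 1] by simp
  show "c 3 6 2 = 0" using Z[of 3 6 2] by simp
  show "c 3 6 3 = 0" using Z[of 3 6 3] by simp
  show "c 3 6 4 = 0" using Z[of 3 6 4] by simp
  show "c 3 6 5 = 0" using Z[of 3 6 5] by simp
  show "c 3 6 6 = 0" using Z[of 3 6 6] by simp
  show "c 3 7 1 = 0" using Z[of 3 7 1] by simp
  show "c 3 7 2 = 0" using Z[of 3 7 2] by simp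
  show "c 3 7 3 = 0" using Z[of 3 7 3] by simp
  show "c 3 7 4 = 0" using Z[of 3 7 4] by simp
  show "c 3 7 5 = 0" using Z[of 3 7 5] by simp
  show "c 3 7 6 = 0" using Z[of 3 7 6] by simp
  show "c 3 7 7 = 0" using Z[of 3 7 7] by simp
  show "c 4 1 1 = 0" using Z[of 4 1 1] by simp
  show "c 4 1 2 = 0" using Z[of 4 1 2] by simp
  show "c 4 1 3 = 0" using Z[of 4 1 3] by simp
  show "c 4 1 4 = 0" using Z[of 4 1 4] by simp
  show "c 4 1 5 = 0" using A[of 4 1 5] assms by simp
  show "c 4 1 6 = 0" using A[of 4 1 6] assms by simp
  show "c 4 1 7 = - c 1 4 7" using A[of 4 1 7] by simp
  show "c 4 2 1 = 0" using Z[of 4 2 1] by simp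
  show "c 4 2 2 = 0" using Z[of 4 2 2] by simp
  show "c 4 2 3 = 0" using Z[of 4 2 3] by simp
  show "c 4 2 4 = 0" using Z[of 4 2 4] by simp
  show "c 4 2 5 = 0" using A[of 4 2 5] assms by simp
  show "c 4 2 6 = 0" using A[of 4 2 6] assms by simp
  show "c 4 2 7 = - c 2 4 7" using A[of 4 2 7] by simp
  show "c 4 3 1 = 0" using Z[of 4 3 1] by simp
  show "c 4 3 2 = 0" using Z[of 4 3 2] by simp
  show "c 4 3 3 = 0" using Z[of 4 3 3] by simp
  show "c 4 3 4 = 0" using Z[of 4 3 4] by simp
  show "c 4 3 5 = -1"
  proof -
    have "c 3 4 5 = 1" by (rule trans[OF C[where i=3 and j=4 and k=5]]) simp_all
    then show ?thesis using A[of 4 3 5] by simp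
  qed
  show "c 4 3 6 = 0"
  proof -
    have "c 3 4 6 = 0" by (rule trans[OF C[where i=3 and j=4 and k=6]]) simp_all
    then show ?thesis using A[of 4 3 6] by simp
  qed
  show "c 4 3 7 = 0"
  proof -
    have "c 3 4 7 = 0" by (rule trans[OF C[where i=3 and j=4 and k=7]]) simp_all
    then show ?thesis using A[of 4 3 7] by simp
  qed
  show "c 4 4 1 = 0" using Z[of 4 4 1] by simp
  show "c 4 4 2 = 0" using Z[of 4 4 2] by simp
  show "c 4 4 3 = 0" using Z[of 4 4 3] by simp
  show "c 4 4 4 = 0" using Z[of 4 4 4] by simp
  show "c 4 4 5 = 0" using A[of 4 4 5] by simp
  show "c 4 4 6 = 0" using A[of 4 4 6] by simp
  show "c 4 4 7 = 0" using A[of 4 4 7] by simp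
  show "c 4 5 1 = 0" using Z[of 4 5 1] by simp
  show "c 4 5 2 = 0" using Z[of 4 5 2] by simp
  show "c 4 5 3 = 0" using Z[of 4 5 3] by simp
  show "c 4 5 4 = 0" using Z[of 4 5 4] by simp
  show "c 4 5 5 = 0" using Z[of 4 5 5] by simp
  show "c 4 5 6 = 1" by (rule trans[OF C[where i=4 and j=5 and k=6]]) simp_all
  show "c 4 5 7 = 0" by (rule trans[OF C[where i=4 and j=5 and k=7]]) simp_all
  show "c 4 6 1 = 0" using Z[of 4 6 1] by simp
  show "c 4 6 2 = 0" using Z[of 4 6 2] by simp
  show "c 4 6 3 = 0" using Z[of 4 6 3] by simp
  show "c 4 6 4 = 0" using Z[of 4 6 4] by simp
  show "c 4 6 5 = 0" using Z[of 4 6 5] by simp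
  show "c 4 6 6 = 0" using Z[of 4 6 6] by simp
  show "c 4 7 1 = 0" using Z[of 4 7 1] by simp
  show "c 4 7 2 = 0" using Z[of 4 7 2] by simp
  show "c 4 7 3 = 0" using Z[of 4 7 3] by simp
  show "c 4 7 4 = 0" using Z[of 4 7 4] by simp
  show "c 4 7 5 = 0" using Z[of 4 7 5] by simp
  show "c 4 7 6 = 0" using Z[of 4 7 6] by simp
  show "c 4 7 7 = 0" using Z[of 4 7 7] by simp
  show "c 5 1 1 = 0" using Z[of 5 1 1] by simp
  show "c 5 1 2 = 0" using Z[of 5 1 2] by simp
  show "c 5 1 3 = 0" using Z[of 5 1 3] by simp
  show "c 5 1 4 = 0" using Z[of 5 1 4] by simp
  show "c 5 1 5 = 0" using Z[of 5 1 5] by simp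
  show "c 5 1 6 = 0" using A[of 5 1 6] assms by simp
  show "c 5 1 7 = - c 1 5 7" using A[of 5 1 7] by simp
  show "c 5 2 1 = 0" using Z[of 5 2 1] by simp
  show "c 5 2 2 = 0" using Z[of 5 2 2] by simp
  show "c 5 2 3 = 0" using Z[of 5 2 3] by simp
  show "c 5 2 4 = 0" using Z[of 5 2 4] by simp
  show "c 5 2 5 = 0" using Z[of 5 2 5] by simp
  show "c 5 2 6 = 0" using A[of 5 2 6] assms by simp
  show "c 5 2 7 = - c 2 5 7" using A[of 5 2 7] by simp
  show "c 5 3 1 = 0" using Z[of 5 3 1] by simp
  show "c 5 3 2 = 0" using Z[of 5 3 2] by simp
  show "c 5 3 3 = 0" using Z[of 5 3 3] by simp
  show "c 5 3 4 = 0" using Z[of 5 3 4] by simp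
  show "c 5 3 5 = 0" using Z[of 5 3 5] by simp
  show "c 5 3 6 = - c 3 5 6" using A[of 5 3 6] by simp
  show "c 5 3 7 = - c 3 5 7" using A[of 5 3 7] by simp
  show "c 5 4 1 = 0" using Z[of 5 4 1] by simp
  show "c 5 4 2 = 0" using Z[of 5 4 2] by simp
  show "c 5 4 3 = 0" using Z[of 5 4 3] by simp
  show "c 5 4 4 = 0" using Z[of 5 4 4] by simp
  show "c 5 4 5 = 0" using Z[of 5 4 5] by simp
  show "c 5 4 6 = -1"
  proof -
    have "c 4 5 6 = 1" by (rule trans[OF C[where i=4 and j=5 and k=6]]) simp_all
    then show ?thesis using A[of 5 4 6] by simp
  qed
  show "c 5 4 7 = 0"
  proof -
    have "c 4 5 7 = 0" by (rule trans[OF C[where i=4 and j=5 and k=7]]) simp_all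
    then show ?thesis using A[of 5 4 7] by simp
  qed
  show "c 5 5 1 = 0" using Z[of 5 5 1] by simp
  show "c 5 5 2 = 0" using Z[of 5 5 2] by simp
  show "c 5 5 3 = 0" using Z[of 5 5 3] by simp
  show "c 5 5 4 = 0" using Z[of 5 5 4] by simp
  show "c 5 5 5 = 0" using Z[of 5 5 5] by simp
  show "c 5 5 6 = 0" using A[of 5 5 6] by simp
  show "c 5 5 7 = 0" using A[of 5 5 7] by simp
  show "c 5 6 1 = 0" using Z[of 5 6 1] by simp
  show "c 5 6 2 = 0" using Z[of 5 6 2] by simp
  show "c 5 6 3 = 0" using Z[of 5 6 3] by simp
  show "c 5 6 4 = 0" using Z[of 5 6 4] by simp
  show "c 5 6 5 = 0" using Z[of 5 6 5] by simp
  show "c 5 6 6 = 0" using Z[of 5 6 6] by simp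
  show "c 5 6 7 = 1" by (rule trans[OF C[where i=5 and j=6 and k=7]]) simp_all
  show "c 5 7 1 = 0" using Z[of 5 7 1] by simp
  show "c 5 7 2 = 0" using Z[of 5 7 2] by simp
  show "c 5 7 3 = 0" using Z[of 5 7 3] by simp
  show "c 5 7 4 = 0" using Z[of 5 7 4] by simp
  show "c 5 7 5 = 0" using Z[of 5 7 5] by simp
  show "c 5 7 6 = 0" using Z[of 5 7 6] by simp
  show "c 5 7 7 = 0" using Z[of 5 7 7] by simp
  show "c 6 1 1 = 0" using Z[of 6 1 1] by simp
  show "c 6 1 2 = 0" using Z[of 6 1 2] by simp
  show "c 6 1 3 = 0" using Z[of 6 1 3] by simp
  show "c 6 1 4 = 0" using Z[of 6 1 4] by simp
  show "c 6 1 5 = 0" using Z[of 6 1 5] by simp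
  show "c 6 1 6 = 0" using Z[of 6 1 6] by simp
  show "c 6 1 7 = - c 1 6 7" using A[of 6 1 7] by simp
  show "c 6 2 1 = 0" using Z[of 6 2 1] by simp
  show "c 6 2 2 = 0" using Z[of 6 2 2] by simp
  show "c 6 2 3 = 0" using Z[of 6 2 3] by simp
  show "c 6 2 4 = 0" using Z[of 6 2 4] by simp
  show "c 6 2 5 = 0" using Z[of 6 2 5] by simp
  show "c 6 2 6 = 0" using Z[of 6 2 6] by simp
  show "c 6 2 7 = - c 2 6 7" using A[of 6 2 7] by simp
  show "c 6 3 1 = 0" using Z[of 6 3 1] by simp
  show "c 6 3 2 = 0" using Z[of 6 3 2] by simp
  show "c 6 3 3 = 0" using Z[of 6 3 3] by simp
  show "c 6 3 4 = 0" using Z[of 6 3 4] by simp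
  show "c 6 3 5 = 0" using Z[of 6 3 5] by simp
  show "c 6 3 6 = 0" using Z[of 6 3 6] by simp
  show "c 6 3 7 = - c 3 6 7" using A[of 6 3 7] by simp
  show "c 6 4 1 = 0" using Z[of 6 4 1] by simp
  show "c 6 4 2 = 0" using Z[of 6 4 2] by simp
  show "c 6 4 3 = 0" using Z[of 6 4 3] by simp
  show "c 6 4 4 = 0" using Z[of 6 4 4] by simp
  show "c 6 4 5 = 0" using Z[of 6 4 5] by simp
  show "c 6 4 6 = 0" using Z[of 6 4 6] by simp
  show "c 6 4 7 = - c 4 6 7" using A[of 6 4 7] by simp
  show "c 6 5 1 = 0" using Z[of 6 5 1] by simp
  show "c 6 5 2 = 0" using Z[of 6 5 2] by simp
  show "c 6 5 3 = 0" using Z[of 6 5 3] by simp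
  show "c 6 5 4 = 0" using Z[of 6 5 4] by simp
  show "c 6 5 5 = 0" using Z[of 6 5 5] by simp
  show "c 6 5 6 = 0" using Z[of 6 5 6] by simp
  show "c 6 5 7 = -1"
  proof -
    have "c 5 6 7 = 1" by (rule trans[OF C[where i=5 and j=6 and k=7]]) simp_all
    then show ?thesis using A[of 6 5 7] by simp
  qed
  show "c 6 6 1 = 0" using Z[of 6 6 1] by simp
  show "c 6 6 2 = 0" using Z[of 6 6 2] by simp
  show "c 6 6 3 = 0" using Z[of 6 6 3] by simp
  show "c 6 6 4 = 0" using Z[of 6 6 4] by simp
  show "c 6 6 5 = 0" using Z[of 6 6 5] by simp
  show "c 6 6 6 = 0" using Z[of 6 6 6] by simp
  show "c 6 6 7 = 0" using A[of 6 6 7] by simp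
  show "c 6 7 1 = 0" using Z[of 6 7 1] by simp
  show "c 6 7 2 = 0" using Z[of 6 7 2] by simp
  show "c 6 7 3 = 0" using Z[of 6 7 3] by simp
  show "c 6 7 4 = 0" using Z[of 6 7 4] by simp
  show "c 6 7 5 = 0" using Z[of 6 7 5] by simp
  show "c 6 7 6 = 0" using Z[of 6 7 6] by simp
  show "c 6 7 7 = 0" using Z[of 6 7 7] by simp
  show "c 7 1 1 = 0" using Z[of 7 1 1] by simp
  show "c 7 1 2 = 0" using Z[of 7 1 2] by simp
  show "c 7 1 3 = 0" using Z[of 7 1 3] by simp
  show "c 7 1 4 = 0" using Z[of 7 1 4] by simp
  show "c 7 1 5 = 0" using Z[of 7 1 5] by simp
  show "c 7 1 6 = 0" using Z[of 7 1 6] by simp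
  show "c 7 1 7 = 0" using Z[of 7 1 7] by simp
  show "c 7 2 1 = 0" using Z[of 7 2 1] by simp
  show "c 7 2 2 = 0" using Z[of 7 2 2] by simp
  show "c 7 2 3 = 0" using Z[of 7 2 3] by simp
  show "c 7 2 4 = 0" using Z[of 7 2 4] by simp
  show "c 7 2 5 = 0" using Z[of 7 2 5] by simp
  show "c 7 2 6 = 0" using Z[of 7 2 6] by simp
  show "c 7 2 7 = 0" using Z[of 7 2 7] by simp
  show "c 7 3 1 = 0" using Z[of 7 3 1] by simp
  show "c 7 3 2 = 0" using Z[of 7 3 2] by simp
  show "c 7 3 3 = 0" using Z[of 7 3 3] by simp
  show "c 7 3 4 = 0" using Z[of 7 3 4] by simp
  show "c 7 3 5 = 0" using Z[of 7 3 5] by simp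
  show "c 7 3 6 = 0" using Z[of 7 3 6] by simp
  show "c 7 3 7 = 0" using Z[of 7 3 7] by simp
  show "c 7 4 1 = 0" using Z[of 7 4 1] by simp
  show "c 7 4 2 = 0" using Z[of 7 4 2] by simp
  show "c 7 4 3 = 0" using Z[of 7 4 3] by simp
  show "c 7 4 4 = 0" using Z[of 7 4 4] by simp
  show "c 7 4 5 = 0" using Z[of 7 4 5] by simp
  show "c 7 4 6 = 0" using Z[of 7 4 6] by simp
  show "c 7 4 7 = 0" using Z[of 7 4 7] by simp
  show "c 7 5 1 = 0" using Z[of 7 5 1] by simp
  show "c 7 5 2 = 0" using Z[of 7 5 2] by simp
  show "c 7 5 3 = 0" using Z[of 7 5 3] by simp
  show "c 7 5 4 = 0" using Z[of 7 5 4] by simp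
  show "c 7 5 5 = 0" using Z[of 7 5 5] by simp
  show "c 7 5 6 = 0" using Z[of 7 5 6] by simp
  show "c 7 5 7 = 0" using Z[of 7 5 7] by simp
  show "c 7 6 1 = 0" using Z[of 7 6 1] by simp
  show "c 7 6 2 = 0" using Z[of 7 6 2] by simp
  show "c 7 6 3 = 0" using Z[of 7 6 3] by simp
  show "c 7 6 4 = 0" using Z[of 7 6 4] by simp
  show "c 7 6 5 = 0" using Z[of 7 6 5] by simp
  show "c 7 6 6 = 0" using Z[of 7 6 6] by simp
  show "c 7 6 7 = 0" using Z[of 7 6 7] by simp
  show "c 7 7 1 = 0" using Z[of 7 7 1] by simp
  show "c 7 7 2 = 0" using Z[of 7 7 2] by simp
  show "c 7 7 3 = 0" using Z[of 7 7 3] by simp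
  show "c 7 7 4 = 0" using Z[of 7 7 4] by simp
  show "c 7 7 5 = 0" using Z[of 7 7 5] by simp
  show "c 7 7 6 = 0" using Z[of 7 7 6] by simp
  show "c 7 7 7 = 0" using Z[of 7 7 7] by simp
qed
lemma set7: "{1..7::nat} = {1,2,3,4,5,6,7}" by auto
lemma prod7:
  fixes c :: "nat \<Rightarrow> nat \<Rightarrow> nat \<Rightarrow> complex"
  assumes T: "in_Tprime 7 c"
    and "c 1 3 4 = 0" and "c 1 4 5 = 0" and "c 1 5 6 = 0" and "c 2 4 5 = 0"
    and "c 2 5 6 = 0" and "c 1 4 6 = 0" and "c 2 4 6 = 0" and "c 1 3 6 = 0"
  shows "alg_mult 7 c x y 1 = 0"
    and "alg_mult 7 c x y 2 = 0"
    and "alg_mult 7 c x y 3 = x 1 * y 2 - x 2 * y 1"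
    and "alg_mult 7 c x y 4 = x 2 * y 3 - x 3 * y 2"
    and "alg_mult 7 c x y 5 = c 1 3 5 * (x 1 * y 3 - x 3 * y 1) + (x 3 * y 4 - x 4 * y 3)"
    and "alg_mult 7 c x y 6 = c 3 5 6 * (x 3 * y 5 - x 5 * y 3) + (x 4 * y 5 - x 5 * y 4)"
    and "alg_mult 7 c x y 7 = c 1 3 7 * (x 1 * y 3 - x 3 * y 1) + c 1 4 7 * (x 1 * y 4 - x 4 * y 1)
      + c 1 5 7 * (x 1 * y 5 - x 5 * y 1) + c 1 6 7 * (x 1 * y 6 - x 6 * y 1)
      + c 2 4 7 * (x 2 * y 4 - x 4 * y 2) + c 2 5 7 * (x 2 * y 5 - x 5 * y 2)
      + c 2 6 7 * (x 2 * y 6 - x 6 * y 2) + (x 5 * y 6 - x 6 * y 5)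
      + c 3 5 7 * (x 3 * y 5 - x 5 * y 3) + c 3 6 7 * (x 3 * y 6 - x 6 * y 3)
      + c 4 6 7 * (x 4 * y 6 - x 6 * y 4)"
  unfolding alg_mult_def set7
  apply (simp_all del: One_nat_def add: cvals[OF assms])
  apply (simp_all add: algebra_simps)
  done
lemma bvec_vsp: "i \<in> {1..n} \<Longrightarrow> bvec i \<in> vsp n"
  by (auto simp: vsp_def bvec_def)

lemma zero_vsp: "(\<lambda>k. 0) \<in> vsp n"
  by (simp add: vsp_def)

lemma lin_zero:
  assumes "lin_on n f" shows "f (\<lambda>k. 0) = (\<lambda>k. 0)"
proof -
  have h: "\<forall>a. \<forall>x\<in>vsp n. f (\<lambda>k. a * x k) = (\<lambda>k. a * f x k)"
    using assms unfolding lin_on_def by blast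
  from h[rule_format, OF zero_vsp, of 0] show ?thesis by simp
qed

lemma lin_sum:
  assumes lin: "lin_on n f" and x: "x \<in> vsp n"
  shows "f x = (\<lambda>k. \<Sum>i\<in>{1..n}. x i * f (bvec i) k)"
proof -
  have add: "\<And>x y. x \<in> vsp n \<Longrightarrow> y \<in> vsp n \<Longrightarrow> f (\<lambda>k. x k + y k) = (\<lambda>k. f x k + f y k)"
    and hom: "\<And>a x. x \<in> vsp n \<Longrightarrow> f (\<lambda>k. a * x k) = (\<lambda>k. a * f x k)"
    using lin unfolding lin_on_def by blast+
  have "m \<le> n \<Longrightarrow> f (\<lambda>k. \<Sum>i\<in>{1..m}. x i * bvec i k) = (\<lambda>k. \<Sum>i\<in>{1..m}. x i * f (bvec i) k)" for m
  proof (induction m)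
    case 0
    then show ?case using lin_zero[OF lin] by simp
  next
    case (Suc m)
    let ?s = "\<lambda>k. \<Sum>i\<in>{1..m}. x i * bvec i k"
    let ?t = "\<lambda>k. x (Suc m) * bvec (Suc m) k"
    have s: "?s \<in> vsp n" using Suc.prems unfolding vsp_def bvec_def
      by (auto intro!: sum.neutral)
    have bv: "bvec (Suc m) \<in> vsp n" using Suc.prems by (intro bvec_vsp) simp
    have t: "?t \<in> vsp n" using bv unfolding vsp_def by simp
    have e: "(\<lambda>k. \<Sum>i\<in>{1..Suc m}. x i * bvec i k) = (\<lambda>k. ?s k + ?t k)"
      by (simp add: sum.cl_ivl_Suc)
    have "f (\<lambda>k. ?s k + ?t k) = (\<lambda>k. f ?s k + f ?t k)" using add[OF s t] .
    also have "f ?t = (\<lambda>k. x (Suc m) * f (bvec (Suc m)) k)" using hom[OF bv] .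
    also have "f ?s = (\<lambda>k. \<Sum>i\<in>{1..m}. x i * f (bvec i) k)" using Suc by simp
    finally show ?case unfolding e by (simp add: sum.cl_ivl_Suc)
  qed
  then have "f (\<lambda>k. \<Sum>i\<in>{1..n}. x i * bvec i k) = (\<lambda>k. \<Sum>i\<in>{1..n}. x i * f (bvec i) k)" by simp
  moreover have "(\<lambda>k. \<Sum>i\<in>{1..n}. x i * bvec i k) = x"
  proof
    fix k
    show "(\<Sum>i\<in>{1..n}. x i * bvec i k) = x k"
    proof (cases "k \<in> {1..n}")
      case True
      then show ?thesis by (simp add: bvec_def if_distrib cong: if_cong)
    next
      case False
      then have "x k = 0" using x unfolding vsp_def by blast
      moreover have "(\<Sum>i\<in>{1..n}. x i * bvec i k) = 0" using False
        by (intro sum.neutral) (auto simp: bvec_def)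
      ultimately show ?thesis by simp
    qed
  qed
  ultimately show ?thesis by simp
qed



lemma basis_prod:
  assumes "i \<in> {1..7}" "j \<in> {1..7}"
  shows "alg_mult 7 c (bvec i) (bvec j) = (\<lambda>k. if k \<in> {1..7} then c i j k else 0)"
proof
  fix k
  have "(\<Sum>i'=1..7. \<Sum>j'=1..7. bvec i i' * bvec j j' * c i' j' k) = c i j k"
  proof -
    have e: "bvec i i' * bvec j j' * c i' j' k = (if j' = j then (if i' = i then c i j k else 0) else 0)" for i' j'
      by (simp add: bvec_def)
    show ?thesis unfolding e using assms by (simp add: sum.delta)
  qed
  then show "alg_mult 7 c (bvec i) (bvec j) k = (if k \<in> {1..7} then c i j k else 0)"
    unfolding alg_mult_def by simp
qed

lemma hom_basis:
  assumes aut: "is_automorphism 7 c f" and ij: "i \<in> {1..7}" "j \<in> {1..7}"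
  shows "(\<Sum>k\<in>{1..7}. c i j k * f (bvec k) m) = alg_mult 7 c (f (bvec i)) (f (bvec j)) m"
proof -
  have lin: "lin_on 7 f" and hom: "\<forall>x\<in>vsp 7. \<forall>y\<in>vsp 7. f (alg_mult 7 c x y) = alg_mult 7 c (f x) (f y)"
    using aut unfolding is_automorphism_def by blast+
  let ?P = "alg_mult 7 c (bvec i) (bvec j)"
  have P: "?P \<in> vsp 7" unfolding vsp_def alg_mult_def by simp
  have "f ?P = alg_mult 7 c (f (bvec i)) (f (bvec j))"
    using hom bvec_vsp[OF ij(1)] bvec_vsp[OF ij(2)] by blast
  moreover have "f ?P m = (\<Sum>k\<in>{1..7}. ?P k * f (bvec k) m)"
    using lin_sum[OF lin P] by simp
  moreover have "(\<Sum>k\<in>{1..7}. ?P k * f (bvec k) m) = (\<Sum>k\<in>{1..7}. c i j k * f (bvec k) m)"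
    using basis_prod[OF ij] by (intro sum.cong) auto
  ultimately show ?thesis by simp
qed


lemma fwd:
  fixes c :: "nat \<Rightarrow> nat \<Rightarrow> nat \<Rightarrow> complex"
  assumes T: "in_Tprime 7 c"
    and z: "c 1 3 4 = 0" "c 1 4 5 = 0" "c 1 5 6 = 0" "c 2 4 5 = 0"
    "c 2 5 6 = 0" "c 1 4 6 = 0" "c 2 4 6 = 0" "c 1 3 6 = 0"
    and nz: "c 1 3 5 * c 3 5 6 * c 4 6 7 \<noteq> 0"
    and aut: "is_automorphism 7 c f"
  shows "f (bvec 1) = (\<lambda>k. bvec 1 k + f (bvec 1) 7 * bvec 7 k)"
    and "f (bvec 2) = (\<lambda>k. bvec 2 k + f (bvec 2) 7 * bvec 7 k)"
    and "\<forall>i. 3 \<le> i \<and> i \<le> 7 \<longrightarrow> f (bvec i) = bvec i"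
proof -
  note cv = cvals[OF T z]
  note pr = prod7[OF T z]
  have p: "c 1 3 5 \<noteq> 0" and q: "c 3 5 6 \<noteq> 0" and r: "c 4 6 7 \<noteq> 0" using nz by auto
  define u where "u = (\<lambda>i. f (bvec i))"
  have lin: "lin_on 7 f" and bij: "bij_betw f (vsp 7) (vsp 7)"
    using aut unfolding is_automorphism_def by blast+
  have uv: "u i \<in> vsp 7" if "i \<in> {1..7}" for i
    using lin bvec_vsp[OF that] unfolding lin_on_def u_def by blast
  have E: "(\<Sum>k\<in>{1,2,3,4,5,6,7}. c i j k * u k m) = alg_mult 7 c (u i) (u j) m"
    if "i \<in> {1..7}" "j \<in> {1..7}" for i j m
    using hom_basis[OF aut that, of m] unfolding u_def set7 .
  have g31: "u 3 1 = 0" and g32: "u 3 2 = 0" and g33: "u 3 3 = u 1 1 * u 2 2 - u 1 2 * u 2 1"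
    and g34: "u 3 4 = u 1 2 * u 2 3 - u 1 3 * u 2 2"
    and g35: "u 3 5 = c 1 3 5 * (u 1 1 * u 2 3 - u 1 3 * u 2 1) + (u 1 3 * u 2 4 - u 1 4 * u 2 3)"
    using E[of 1 2 1] E[of 1 2 2] E[of 1 2 3] E[of 1 2 4] E[of 1 2 5]
    by (simp_all del: One_nat_def add: cv pr)
  let ?D = "u 1 1 * u 2 2 - u 1 2 * u 2 1"
  have g41: "u 4 1 = 0" and g42: "u 4 2 = 0" and g43: "u 4 3 = 0" and g44: "u 4 4 = u 2 2 * ?D"
    and g45: "u 4 5 = c 1 3 5 * (u 2 1 * u 3 3) + (u 2 3 * u 3 4 - u 2 4 * u 3 3)"
    using E[of 2 3 1] E[of 2 3 2] E[of 2 3 3] E[of 2 3 4] E[of 2 3 5] g31 g32 g33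
    by (simp_all del: One_nat_def add: cv pr)
  have g51: "u 5 1 = 0" and g52: "u 5 2 = 0" and g53: "u 5 3 = 0" and g54: "u 5 4 = 0"
    and g55: "u 5 5 = ?D * (u 2 2 * ?D)"
    and g56: "u 5 6 = c 3 5 6 * (u 3 3 * u 4 5 - u 3 5 * u 4 3) + (u 3 4 * u 4 5 - u 3 5 * u 4 4)"
    using E[of 3 4 1] E[of 3 4 2] E[of 3 4 3] E[of 3 4 4] E[of 3 4 5] E[of 3 4 6]
      g31 g32 g33 g41 g42 g43 g44
    by (simp_all del: One_nat_def add: cv pr)
  have g61: "u 6 1 = 0" and g62: "u 6 2 = 0" and g63: "u 6 3 = 0" and g64: "u 6 4 = 0"
    and g65: "u 6 5 = 0" and g66: "u 6 6 = u 4 4 * u 5 5"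
    using E[of 4 5 1] E[of 4 5 2] E[of 4 5 3] E[of 4 5 4] E[of 4 5 5] E[of 4 5 6]
      g41 g42 g43 g51 g52 g53 g54
    by (simp_all del: One_nat_def add: cv pr)
  have g71: "u 7 1 = 0" and g72: "u 7 2 = 0" and g73: "u 7 3 = 0" and g74: "u 7 4 = 0"
    and g75: "u 7 5 = 0" and g76: "u 7 6 = 0" and g77: "u 7 7 = u 5 5 * u 6 6"
    using E[of 5 6 1] E[of 5 6 2] E[of 5 6 3] E[of 5 6 4] E[of 5 6 5] E[of 5 6 6] E[of 5 6 7]
      g51 g52 g53 g54 g61 g62 g63 g64 g65
    by (simp_all del: One_nat_def add: cv pr)
  have u77: "u 7 7 \<noteq> 0"
  proof
    assume a: "u 7 7 = 0"
    have "u 7 = (\<lambda>k. 0)"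
    proof
      fix k
      show "u 7 k = 0"
      proof (cases "k \<in> {1..7}")
        case True
        then have "k = 1 \<or> k = 2 \<or> k = 3 \<or> k = 4 \<or> k = 5 \<or> k = 6 \<or> k = 7" by auto
        then show ?thesis using a g71 g72 g73 g74 g75 g76 by (elim disjE) simp_all
      next
        case False
        then show ?thesis using uv[of 7] unfolding vsp_def by simp
      qed
    qed
    then have "f (bvec 7) = f (\<lambda>k. 0)" using lin_zero[OF lin] unfolding u_def by simp
    moreover have "inj_on f (vsp 7)" using bij by (simp add: bij_betw_def)
    ultimately have "bvec 7 = (\<lambda>k. 0)" using bvec_vsp[of 7 7] zero_vsp[of 7]
      by (auto dest: inj_onD)
    then have "bvec 7 7 = 0" by simp
    then show False by (simp add: bvec_def)
  qed
  have Dnz: "?D \<noteq> 0" and u22nz: "u 2 2 \<noteq> 0"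
    using u77 unfolding g77 g66 g55 g44 by auto
  have u44nz: "u 4 4 \<noteq> 0" using Dnz u22nz g44 by simp
  have u55nz: "u 5 5 \<noteq> 0" using Dnz u22nz g55 by simp
  have u66nz: "u 6 6 \<noteq> 0" using u44nz u55nz g66 by simp
  have h1: "u 1 2 = 0"
  proof -
    have "u 1 2 * ?D = 0" using E[of 1 3 4] g31 g32 g33 g54 g74
      by (simp del: One_nat_def add: cv pr)
    then show ?thesis using Dnz by simp
  qed
  have D: "?D = u 1 1 * u 2 2" using h1 by simp
  have u11nz: "u 1 1 \<noteq> 0" using Dnz h1 by (simp del: One_nat_def)
  have h2: "u 2 3 = 0"
  proof -
    have "u 2 3 * u 4 4 = 0" using E[of 2 4 5] g41 g42 g43 g75
      by (simp del: One_nat_def add: cv pr)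
    then show ?thesis using u44nz by simp
  qed
  have h3: "u 1 3 = 0"
  proof -
    have "u 1 3 * u 4 4 = 0" using E[of 1 4 5] g41 g42 g43 g75
      by (simp del: One_nat_def add: cv pr)
    then show ?thesis using u44nz by simp
  qed
  have h4: "u 2 4 = 0"
  proof -
    have "u 2 4 * u 5 5 = 0" using E[of 2 5 6] g51 g52 g53 g54 g76 h2
      by (simp del: One_nat_def add: cv pr)
    then show ?thesis using u55nz by simp
  qed
  have h5: "u 1 4 = 0"
  proof -
    have "u 1 4 * u 5 5 = 0" using E[of 1 5 6] g51 g52 g53 g54 g76 h3
      by (simp del: One_nat_def add: cv pr)
    then show ?thesis using u55nz by simp
  qed
  have h6: "u 2 2 * u 2 2 = 1"
  proof -
    have "c 1 3 5 * u 5 5 = c 1 3 5 * (u 1 1 * ?D)" using E[of 1 3 5] g31 g32 g33 g34 g75 h3 h5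
      by (simp del: One_nat_def add: cv pr)
    then have "u 5 5 = u 1 1 * ?D" using p by simp
    then have "(u 1 1 * u 1 1 * u 2 2) * (u 2 2 * u 2 2) = (u 1 1 * u 1 1 * u 2 2) * 1"
      unfolding g55 D by (simp add: algebra_simps)
    then show ?thesis using u11nz u22nz by (simp del: One_nat_def)
  qed
  have h7: "u 2 5 = 0"
  proof -
    have "u 2 5 * u 4 4 = 0" using E[of 2 4 6] g41 g42 g43 g66 g76 h2 h4
      by (simp del: One_nat_def add: cv pr)
    then show ?thesis using u44nz by simp
  qed
  have h8: "u 1 5 = 0"
  proof -
    have "u 1 5 * u 4 4 = 0" using E[of 1 4 6] g41 g42 g43 g66 g76 h3 h5
      by (simp del: One_nat_def add: cv pr)
    then show ?thesis using u44nz by simp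
  qed
  have g34': "u 3 4 = 0" using g34 h1 h3 by simp
  have h9: "u 2 2 = 1"
  proof -
    have "c 3 5 6 * u 6 6 = c 3 5 6 * (u 3 3 * u 5 5)" using E[of 3 5 6] g31 g32 g34' g51 g52 g53 g54 g76
      by (simp del: One_nat_def add: cv pr)
    then have "u 4 4 * u 5 5 = u 3 3 * u 5 5" using q g66 by simp
    then have "u 4 4 = u 3 3" using u55nz by simp
    then have "u 2 2 * ?D = 1 * ?D" using g44 g33 by simp
    then show ?thesis using Dnz by (simp only: mult_cancel_right) simp
  qed
  have g35': "u 3 5 = 0" using g35 h2 h3 h5 by simp
  have g45': "u 4 5 = c 1 3 5 * u 2 1 * ?D" using g45 h2 h4 g33 by simp
  have g56': "u 5 6 = c 3 5 6 * c 1 3 5 * u 2 1 * ?D * ?D" using g56 g35' g34' g43 g45' g33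
    by (simp add: algebra_simps)
  have h10: "u 2 1 = 0"
  proof -
    have "c 1 3 5 * u 5 6 = 0" using E[of 1 3 6] g31 g32 g34' g35' g76 h3 h5 h8
      by (simp del: One_nat_def add: cv pr)
    then have "c 1 3 5 * (c 3 5 6 * c 1 3 5 * u 2 1 * ?D * ?D) = 0" using g56' by simp
    then show ?thesis using p q Dnz by simp
  qed
  have D1: "?D = u 1 1" using h1 h9 by simp
  have h11: "u 1 1 = 1"
  proof -
    have g45'': "u 4 5 = 0" using g45' h10 by simp
    have "c 4 6 7 * u 7 7 = c 4 6 7 * (u 4 4 * u 6 6)"
      using E[of 4 6 7] g41 g42 g43 g45'' g61 g62 g63 g64 g65
      by (simp del: One_nat_def add: cv pr algebra_simps)
    then have "u 5 5 * u 6 6 = u 4 4 * u 6 6" using r g77 by simp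
    then have "u 5 5 = u 4 4" using u66nz by simp
    then have "u 1 1 * u 1 1 = u 1 1 * 1" using g55 g44 h1 h9 by (simp del: One_nat_def)
    then show ?thesis using u11nz by (simp only: mult_cancel_left) simp
  qed
  have d33: "u 3 3 = 1" using g33 h1 h9 h11 by (simp del: One_nat_def)
  have d44: "u 4 4 = 1" using g44 h1 h9 h11 by (simp del: One_nat_def)
  have d55: "u 5 5 = 1" using g55 h1 h9 h11 by (simp del: One_nat_def)
  have d66: "u 6 6 = 1" using g66 d44 d55 by simp
  have d77: "u 7 7 = 1" using g77 d55 d66 by simp
  have d45: "u 4 5 = 0" using g45' h10 by simp
  have d56: "u 5 6 = 0" using g56' h10 by simp
  have h12: "u 1 6 = 0"
    using E[of 1 5 7] g51 g52 g53 g54 d55 d56 d77 h1 h3 h5 h8 h11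
    by (simp del: One_nat_def add: cv pr)
  have h13: "u 2 6 = 0"
    using E[of 2 5 7] g51 g52 g53 g54 d55 d56 d77 h10 h9 h2 h4 h7
    by (simp del: One_nat_def add: cv pr)
  note U12 = h1 h3 h5 h8 h11 h12 h10 h9 h2 h4 h7 h13
  have d36: "u 3 6 = 0" and d37: "u 3 7 = 0"
    using E[of 1 2 6] E[of 1 2 7] U12 by (simp_all del: One_nat_def add: cv pr)
  note U3 = g31 g32 d33 g34' g35' d36 d37
  have d46: "u 4 6 = 0" and d47: "u 4 7 = 0"
    using E[of 2 3 6] E[of 2 3 7] U12 U3 by (simp_all del: One_nat_def add: cv pr)
  note U4 = g41 g42 g43 d44 d45 d46 d47
  have d57: "u 5 7 = 0"
    using E[of 3 4 7] U3 U4 by (simp_all del: One_nat_def add: cv pr)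
  note U5 = g51 g52 g53 g54 d55 d56 d57
  have d67: "u 6 7 = 0"
    using E[of 4 5 7] U4 U5 by (simp_all del: One_nat_def add: cv pr)
  note U6 = g61 g62 g63 g64 g65 d66 d67
  note U7 = g71 g72 g73 g74 g75 g76 d77
  have ext7: "v = w" if "v \<in> vsp 7" "\<And>k. k = 0 \<or> 7 < k \<Longrightarrow> w k = 0"
    "v 1 = w 1" "v 2 = w 2" "v 3 = w 3" "v 4 = w 4" "v 5 = w 5" "v 6 = w 6" "v 7 = w 7"
    for v w :: "nat \<Rightarrow> complex"
  proof
    fix k
    show "v k = w k"
    proof (cases "k \<in> {1..7}")
      case True
      then have "k = 1 \<or> k = 2 \<or> k = 3 \<or> k = 4 \<or> k = 5 \<or> k = 6 \<or> k = 7" by auto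
      then show ?thesis using that by (elim disjE) simp_all
    next
      case False
      then have "k = 0 \<or> 7 < k" by auto
      then show ?thesis using that False unfolding vsp_def by simp
    qed
  qed
  have "u 1 = (\<lambda>k. bvec 1 k + u 1 7 * bvec 7 k)"
    by (rule ext7[OF uv]) (simp_all del: One_nat_def add: bvec_def U12, auto)
  then show "f (bvec 1) = (\<lambda>k. bvec 1 k + f (bvec 1) 7 * bvec 7 k)"
    unfolding u_def .
  have "u 2 = (\<lambda>k. bvec 2 k + u 2 7 * bvec 7 k)"
    by (rule ext7[OF uv]) (simp_all del: One_nat_def add: bvec_def U12, auto)
  then show "f (bvec 2) = (\<lambda>k. bvec 2 k + f (bvec 2) 7 * bvec 7 k)"
    unfolding u_def .
  show "\<forall>i. 3 \<le> i \<and> i \<le> 7 \<longrightarrow> f (bvec i) = bvec i"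
  proof (intro allI impI)
    fix i :: nat assume "3 \<le> i \<and> i \<le> 7"
    then have "i = 3 \<or> i = 4 \<or> i = 5 \<or> i = 6 \<or> i = 7" by auto
    moreover have "u 3 = bvec 3" "u 4 = bvec 4" "u 5 = bvec 5" "u 6 = bvec 6" "u 7 = bvec 7"
      by (rule ext7[OF uv]; simp_all del: One_nat_def add: bvec_def U3 U4 U5 U6 U7; auto)+
    ultimately have "u i = bvec i" by auto
    then show "f (bvec i) = bvec i" unfolding u_def .
  qed
qed


lemma bwd:
  fixes c :: "nat \<Rightarrow> nat \<Rightarrow> nat \<Rightarrow> complex"
  assumes T: "in_Tprime 7 c"
    and z: "c 1 3 4 = 0" "c 1 4 5 = 0" "c 1 5 6 = 0" "c 2 4 5 = 0"
    "c 2 5 6 = 0" "c 1 4 6 = 0" "c 2 4 6 = 0" "c 1 3 6 = 0"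
    and lin: "lin_on 7 f"
    and f1: "f (bvec 1) = (\<lambda>k. bvec 1 k + a * bvec 7 k)"
    and f2: "f (bvec 2) = (\<lambda>k. bvec 2 k + b * bvec 7 k)"
    and fi: "\<forall>i. 3 \<le> i \<and> i \<le> 7 \<longrightarrow> f (bvec i) = bvec i"
  shows "is_automorphism 7 c f"
proof -
  note pr = prod7[OF T z]
  have f3: "f (bvec 3) = bvec 3" and f4: "f (bvec 4) = bvec 4" and f5: "f (bvec 5) = bvec 5"
    and f6: "f (bvec 6) = bvec 6" and f7: "f (bvec 7) = bvec 7" using fi by simp_all
  have k7: "k = 1 \<or> k = 2 \<or> k = 3 \<or> k = 4 \<or> k = 5 \<or> k = 6 \<or> k = 7" if "k \<in> {1..7}" for k :: nat
    using that by auto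
  have fx: "f x k = x k + (if k = 7 then a * x 1 + b * x 2 else 0)" if x: "x \<in> vsp 7" for x k
  proof -
    have "f x k = (\<Sum>i\<in>{1..7}. x i * f (bvec i) k)" using lin_sum[OF lin x] by simp
    also have "\<dots> = x 1 * (bvec 1 k + a * bvec 7 k) + (x 2 * (bvec 2 k + b * bvec 7 k) + (x 3 * bvec 3 k
       + (x 4 * bvec 4 k + (x 5 * bvec 5 k + (x 6 * bvec 6 k + x 7 * bvec 7 k)))))"
      unfolding set7 by (simp del: One_nat_def add: f1 f2 f3 f4 f5 f6 f7)
    also have "\<dots> = x k + (if k = 7 then a * x 1 + b * x 2 else 0)"
    proof (cases "k \<in> {1..7}")
      case True
      then show ?thesis using k7[OF True] by (elim disjE) (simp_all del: One_nat_def add: bvec_def algebra_simps)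
    next
      case False
      then have "x k = 0" using x unfolding vsp_def by blast
      moreover have "k \<noteq> 1" "k \<noteq> 2" "k \<noteq> 3" "k \<noteq> 4" "k \<noteq> 5" "k \<noteq> 6" "k \<noteq> 7" using False by auto
      ultimately show ?thesis by (simp del: One_nat_def add: bvec_def)
    qed
    finally show ?thesis .
  qed
  have img: "f x \<in> vsp 7" if "x \<in> vsp 7" for x using lin that unfolding lin_on_def by blast
  have inj: "inj_on f (vsp 7)"
  proof (rule inj_onI)
    fix x y assume x: "x \<in> vsp 7" and y: "y \<in> vsp 7" and e: "f x = f y"
    have ne: "x k = y k" if "k \<noteq> 7" for k using fx[OF x, of k] fx[OF y, of k] e that by simp
    have "x 7 = y 7" using fx[OF x, of 7] fx[OF y, of 7] e ne[of 1] ne[of 2] by simp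
    then show "x = y" using ne by (intro ext) (metis)
  qed
  have surj: "vsp 7 \<subseteq> f ` vsp 7"
  proof
    fix y assume y: "y \<in> vsp 7"
    define x where "x = (\<lambda>k. y k - (if k = 7 then a * y 1 + b * y 2 else 0))"
    have x: "x \<in> vsp 7" using y unfolding vsp_def x_def by auto
    have "f x = y"
    proof
      fix k show "f x k = y k" using fx[OF x, of k] unfolding x_def by simp
    qed
    then show "y \<in> f ` vsp 7" using x by blast
  qed
  have bij: "bij_betw f (vsp 7) (vsp 7)"
    unfolding bij_betw_def using inj img surj by blast
  have hom: "f (alg_mult 7 c x y) = alg_mult 7 c (f x) (f y)" if x: "x \<in> vsp 7" and y: "y \<in> vsp 7" for x y
  proof
    fix k
    have xy: "alg_mult 7 c x y \<in> vsp 7" unfolding vsp_def alg_mult_def by simp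
    have fxi: "f x i = x i" "f y i = y i" if "i \<noteq> 7" for i using fx[OF x, of i] fx[OF y, of i] that by simp_all
    show "f (alg_mult 7 c x y) k = alg_mult 7 c (f x) (f y) k"
    proof (cases "k \<in> {1..7}")
      case True
      have "f (alg_mult 7 c x y) k = alg_mult 7 c x y k" using fx[OF xy, of k] pr(1,2) by simp
      also have "\<dots> = alg_mult 7 c (f x) (f y) k"
        using k7[OF True] by (elim disjE) (simp_all del: One_nat_def add: pr fxi)
      finally show ?thesis .
    next
      case False
      then have "k \<noteq> 7" by auto
      then have "f (alg_mult 7 c x y) k = alg_mult 7 c x y k" using fx[OF xy, of k] by simp
      moreover have "alg_mult 7 c x y k = 0" "alg_mult 7 c (f x) (f y) k = 0"
        using False unfolding alg_mult_def by auto
      ultimately show ?thesis by simp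
    qed
  qed
  show ?thesis unfolding is_automorphism_def using lin bij hom by blast
qed


theorem mainTheorem17:
  fixes c :: "nat \<Rightarrow> nat \<Rightarrow> nat \<Rightarrow> complex"
  assumes "in_Tprime 7 c"
    and "c 1 3 4 = 0" and "c 1 4 5 = 0" and "c 1 5 6 = 0" and "c 2 4 5 = 0"
    and "c 2 5 6 = 0" and "c 1 4 6 = 0" and "c 2 4 6 = 0" and "c 1 3 6 = 0"
    and "c 1 3 5 * c 3 5 6 * c 4 6 7 \<noteq> 0"
  shows "\<forall>f. is_automorphism 7 c f \<longleftrightarrow>
    (lin_on 7 f \<and> (\<exists>a71 a72.
        f (bvec 1) = (\<lambda>k. bvec 1 k + a71 * bvec 7 k)
      \<and> f (bvec 2) = (\<lambda>k. bvec 2 k + a72 * bvec 7 k)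
      \<and> (\<forall>i. 3 \<le> i \<and> i \<le> 7 \<longrightarrow> f (bvec i) = bvec i)))"
proof (intro allI iffI)
  fix f
  assume aut: "is_automorphism 7 c f"
  have lin: "lin_on 7 f" using aut unfolding is_automorphism_def by blast
  note F = fwd[OF assms aut]
  show "lin_on 7 f \<and> (\<exists>a71 a72.
        f (bvec 1) = (\<lambda>k. bvec 1 k + a71 * bvec 7 k)
      \<and> f (bvec 2) = (\<lambda>k. bvec 2 k + a72 * bvec 7 k)
      \<and> (\<forall>i. 3 \<le> i \<and> i \<le> 7 \<longrightarrow> f (bvec i) = bvec i))"
    using lin F by blast
next
  fix f
  assume h: "lin_on 7 f \<and> (\<exists>a71 a72.
        f (bvec 1) = (\<lambda>k. bvec 1 k + a71 * bvec 7 k)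
      \<and> f (bvec 2) = (\<lambda>k. bvec 2 k + a72 * bvec 7 k)
      \<and> (\<forall>i. 3 \<le> i \<and> i \<le> 7 \<longrightarrow> f (bvec i) = bvec i))"
  then obtain a71 a72 where
    "f (bvec 1) = (\<lambda>k. bvec 1 k + a71 * bvec 7 k)"
    "f (bvec 2) = (\<lambda>k. bvec 2 k + a72 * bvec 7 k)"
    "\<forall>i. 3 \<le> i \<and> i \<le> 7 \<longrightarrow> f (bvec i) = bvec i" by blast
  with h show "is_automorphism 7 c f"
    using bwd[OF assms(1-9)] by blast
qed

end
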